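(* Let $f\colon\mathbb{R}\to\mathbb{R}$ be a nonnegative Borel-measurable function such that $f(x)=0$ if and only if $x=0$. Define \[ c_f:=\sup\Big\{\frac{af(b)+bf(-a)}{af(b-t)+bf(-a-t)}\colon a\in(0,\infty),\ b\in(0,\infty),\ t\in\mathbb{R}\Big\}\in(0,\infty]. \] Then for every real-valued random variable $X$ with a finite mean $\mathsf{E}X$, \[ \mathsf{E} f(X-\mathsf{E} X)\le c_f\,\mathsf{E} f(X), \] and $c_f$ is the best possible constant factor in this inequality over all random variables $X$ with a finite mean (i.e., for every constant $c<c_f$ there exists a random variable $X$ with finite mean such that $\mathsf{E} f(X-\mathsf{E} X)> c\,\mathsf{E} f(X)$).
   Context: For $a,b>0$ and $t\in\mathbb{R}$ both numerator and denominator of the ratio in the definition of $c_f$ are strictly positive, so $c_f$ is well defined with values in $(0,\infty]$. *)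

theory Defs
  imports "HOL-Probability.Probability"
begin

definition cf :: "(real \<Rightarrow> real) \<Rightarrow> ennreal" where
  "cf f = (SUP p \<in> {(a, b, t). (a::real) > 0 \<and> (b::real) > 0 \<and> (t::real) \<in> UNIV}.
      (case p of (a, b, t) \<Rightarrow>
         ennreal ((a * f b + b * f (- a)) / (a * f (b - t) + b * f (- a - t)))))"

end

theory Submission
  imports Defs
begin

lemma cf_bound:
  fixes f :: "real \<Rightarrow> real"
  assumes f0: "\<forall>x. f x \<ge> 0" and fz: "\<forall>x. f x = 0 \<longleftrightarrow> x = 0" and a: "a > 0" and b: "b > 0"
  shows "ennreal a * ennreal (f b) + ennreal b * ennreal (f (-a))
     \<le> cf f * (ennreal a * ennreal (f (b-t)) + ennreal b * ennreal (f (-a-t)))"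
proof -
  define N where "N = a * f b + b * f (-a)"
  define D where "D = a * f (b-t) + b * f (-a-t)"
  have "b - t \<noteq> -a - t" using a b by auto
  hence "f (b-t) > 0 \<or> f (-a-t) > 0" using f0 fz by (metis less_eq_real_def)
  hence Dpos: "D > 0" unfolding D_def using a b f0
    by (auto intro: add_pos_nonneg add_nonneg_pos)
  have N0: "N \<ge> 0" unfolding N_def using a b f0 by simp
  have le: "ennreal (N / D) \<le> cf f"
    unfolding cf_def N_def D_def
    by (rule SUP_upper2[of "(a,b,t)"]) (use a b in auto)
  have "ennreal N = ennreal (N/D * D)" using Dpos by simp
  also have "\<dots> = ennreal (N/D) * ennreal D"
    using Dpos N0 by (intro ennreal_mult) auto
  also have "\<dots> \<le> cf f * ennreal D" by (rule mult_right_mono[OF le]) simp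
  finally have "ennreal N \<le> cf f * ennreal D" .
  moreover have "ennreal N = ennreal a * ennreal (f b) + ennreal b * ennreal (f (-a))"
    unfolding N_def using a b f0 by (simp add: ennreal_plus ennreal_mult)
  moreover have "ennreal D = ennreal a * ennreal (f (b-t)) + ennreal b * ennreal (f (-a-t))"
    unfolding D_def using a b f0 by (simp add: ennreal_plus ennreal_mult)
  ultimately show ?thesis by simp
qed

lemma part1:
  fixes f :: "real \<Rightarrow> real" and X :: "'a \<Rightarrow> real"
  assumes fm[measurable]: "f \<in> borel_measurable borel"
    and f0: "\<forall>x. f x \<ge> 0" and fz: "\<forall>x. f x = 0 \<longleftrightarrow> x = 0"
    and ps: "prob_space M" and Xm[measurable]: "X \<in> borel_measurable M" and Xi: "integrable M X"
  shows "(\<integral>\<^sup>+ \<omega>. ennreal (f (X \<omega> - (\<integral> \<omega>'. X \<omega>' \<partial>M))) \<partial>M)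
                \<le> cf f * (\<integral>\<^sup>+ \<omega>. ennreal (f (X \<omega>)) \<partial>M)"
proof -
  interpret prob_space M by (rule ps)
  have f00[simp]: "f 0 = 0" using fz by simp
  define m where "m = (\<integral> \<omega>'. X \<omega>' \<partial>M)"
  define C where "C = cf f"
  define P where "P = (\<lambda>\<omega>. ennreal (X \<omega> - m))"
  define Nn where "Nn = (\<lambda>\<omega>. ennreal (m - X \<omega>))"
  define F where "F = (\<lambda>\<omega>. ennreal (f (X \<omega> - m)))"
  define G where "G = (\<lambda>\<omega>. ennreal (f (X \<omega>)))"
  define Fp where "Fp = (\<lambda>\<omega>. if m < X \<omega> then F \<omega> else 0)"
  define Fn where "Fn = (\<lambda>\<omega>. if X \<omega> < m then F \<omega> else 0)"
  define Gp where "Gp = (\<lambda>\<omega>. if m < X \<omega> then G \<omega> else 0)"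
  define Gn where "Gn = (\<lambda>\<omega>. if X \<omega> < m then G \<omega> else 0)"
  have [measurable]: "P \<in> borel_measurable M" "Nn \<in> borel_measurable M"
    "F \<in> borel_measurable M" "G \<in> borel_measurable M"
    "Fp \<in> borel_measurable M" "Fn \<in> borel_measurable M"
    "Gp \<in> borel_measurable M" "Gn \<in> borel_measurable M"
    unfolding P_def Nn_def F_def G_def Fp_def Fn_def Gp_def Gn_def by measurable
  define S where "S = integral\<^sup>N M Nn"
  have Xmi: "integrable M (\<lambda>\<omega>. X \<omega> - m)" using Xi by auto
  have int0: "(\<integral> \<omega>. X \<omega> - m \<partial>M) = 0"
    using Xi by (simp add: m_def prob_space)
  have finP: "integral\<^sup>N M P < \<infinity>"
  proof -
    have "integral\<^sup>N M P \<le> (\<integral>\<^sup>+ \<omega>. ennreal (norm (X \<omega> - m)) \<partial>M)"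
      unfolding P_def by (rule nn_integral_mono) auto
    also have "\<dots> < \<infinity>" using Xmi by (simp add: integrable_iff_bounded)
    finally show ?thesis .
  qed
  have finN: "integral\<^sup>N M Nn < \<infinity>"
  proof -
    have "integral\<^sup>N M Nn \<le> (\<integral>\<^sup>+ \<omega>. ennreal (norm (X \<omega> - m)) \<partial>M)"
      unfolding Nn_def by (rule nn_integral_mono) auto
    also have "\<dots> < \<infinity>" using Xmi by (simp add: integrable_iff_bounded)
    finally show ?thesis .
  qed
  have "0 = enn2real (integral\<^sup>N M P) - enn2real (integral\<^sup>N M Nn)"
    using real_lebesgue_integral_def[OF Xmi] int0 unfolding P_def Nn_def by simp
  hence "enn2real (integral\<^sup>N M P) = enn2real (integral\<^sup>N M Nn)" by simp
  hence eqr: "enn2real (integral\<^sup>N M P) = enn2real (integral\<^sup>N M Nn)" by simp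
  have "integral\<^sup>N M P = ennreal (enn2real (integral\<^sup>N M P))" using finP by simp
  also have "\<dots> = ennreal (enn2real (integral\<^sup>N M Nn))" using eqr by simp
  also have "\<dots> = integral\<^sup>N M Nn" using finN by simp
  finally have PS: "integral\<^sup>N M P = S" unfolding S_def .
  have goal: "integral\<^sup>N M F \<le> C * integral\<^sup>N M G"
  proof (cases "S = 0")
    case True
    have "AE \<omega> in M. P \<omega> = 0" using PS True by (simp add: nn_integral_0_iff_AE)
    moreover have "AE \<omega> in M. Nn \<omega> = 0" using True unfolding S_def
      by (simp add: nn_integral_0_iff_AE)
    ultimately have "AE \<omega> in M. F \<omega> = 0"
      by eventually_elim (auto simp: P_def Nn_def F_def fz ennreal_eq_0_iff)
    hence "integral\<^sup>N M F = 0" by (simp add: nn_integral_0_iff_AE)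
    thus ?thesis by simp
  next
    case False
    have Sfin: "S \<noteq> top" using finN S_def by simp
    have step1: "S * ennreal (f b) + ennreal b * integral\<^sup>N M Fn
        \<le> C * (S * ennreal (f (b+m)) + ennreal b * integral\<^sup>N M Gn)" if b: "b > 0" for b
    proof -
      have pw: "Nn \<omega> * ennreal (f b) + ennreal b * Fn \<omega>
          \<le> C * (Nn \<omega> * ennreal (f (b+m)) + ennreal b * Gn \<omega>)" for \<omega>
      proof (cases "X \<omega> < m")
        case True
        have "m - X \<omega> > 0" using True by simp
        from cf_bound[OF f0 fz this b, of "-m"] True show ?thesis
          by (simp add: Nn_def Fn_def Gn_def F_def G_def C_def mult.commute)
      next
        case False
        thus ?thesis by (simp add: Nn_def Fn_def Gn_def ennreal_neg)
      qed
      have "(\<integral>\<^sup>+\<omega>. Nn \<omega> * ennreal (f b) + ennreal b * Fn \<omega> \<partial>M)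
          \<le> (\<integral>\<^sup>+\<omega>. C * (Nn \<omega> * ennreal (f (b+m)) + ennreal b * Gn \<omega>) \<partial>M)"
        by (rule nn_integral_mono) (rule pw)
      thus ?thesis
        by (simp add: nn_integral_add nn_integral_cmult nn_integral_multc S_def)
    qed
    have pw2: "S * Fp \<omega> + P \<omega> * integral\<^sup>N M Fn
        \<le> C * (S * Gp \<omega> + P \<omega> * integral\<^sup>N M Gn)" for \<omega>
    proof (cases "m < X \<omega>")
      case True
      hence "X \<omega> - m > 0" by simp
      from step1[OF this] True show ?thesis
        by (simp add: P_def Fp_def Gp_def F_def G_def)
    next
      case False
      thus ?thesis by (simp add: P_def Fp_def Gp_def ennreal_neg)
    qed
    have "(\<integral>\<^sup>+\<omega>. S * Fp \<omega> + P \<omega> * integral\<^sup>N M Fn \<partial>M)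
        \<le> (\<integral>\<^sup>+\<omega>. C * (S * Gp \<omega> + P \<omega> * integral\<^sup>N M Gn) \<partial>M)"
      by (rule nn_integral_mono) (rule pw2)
    hence "S * integral\<^sup>N M Fp + S * integral\<^sup>N M Fn
        \<le> C * (S * integral\<^sup>N M Gp + S * integral\<^sup>N M Gn)"
      by (simp add: nn_integral_add nn_integral_cmult nn_integral_multc PS)
    hence "S * (integral\<^sup>N M Fp + integral\<^sup>N M Fn)
        \<le> S * (C * (integral\<^sup>N M Gp + integral\<^sup>N M Gn))"
      by (simp add: distrib_left ac_simps)
    hence le1: "integral\<^sup>N M Fp + integral\<^sup>N M Fn \<le> C * (integral\<^sup>N M Gp + integral\<^sup>N M Gn)"
      using False Sfin by (simp add: ennreal_mult_le_mult_iff)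
    have "integral\<^sup>N M F = (\<integral>\<^sup>+\<omega>. Fp \<omega> + Fn \<omega> \<partial>M)"
      by (rule nn_integral_cong) (auto simp: Fp_def Fn_def F_def fz)
    also have "\<dots> = integral\<^sup>N M Fp + integral\<^sup>N M Fn" by (simp add: nn_integral_add)
    finally have eqF: "integral\<^sup>N M F = integral\<^sup>N M Fp + integral\<^sup>N M Fn" .
    have "integral\<^sup>N M Gp + integral\<^sup>N M Gn = (\<integral>\<^sup>+\<omega>. Gp \<omega> + Gn \<omega> \<partial>M)"
      by (simp add: nn_integral_add)
    also have "\<dots> \<le> integral\<^sup>N M G"
      by (rule nn_integral_mono) (auto simp: Gp_def Gn_def)
    finally have "integral\<^sup>N M Gp + integral\<^sup>N M Gn \<le> integral\<^sup>N M G" .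
    hence "C * (integral\<^sup>N M Gp + integral\<^sup>N M Gn) \<le> C * integral\<^sup>N M G"
      by (rule mult_left_mono) simp
    with le1 eqF show ?thesis by simp
  qed
  thus ?thesis by (simp add: F_def G_def C_def m_def)
qed


lemma mixlem:
  fixes a b x y :: real
  assumes ne: "a + b \<noteq> 0"
  shows "x*(a/(a+b)) + y*(1 - a/(a+b)) = (a*x+b*y)/(a+b)"
proof -
  have e: "1 - a/(a+b) = b/(a+b)" using ne by (simp add: field_simps)
  have "x*(a/(a+b)) + y*(b/(a+b)) = (a*x)/(a+b) + (b*y)/(a+b)" by (simp add: mult.commute)
  also have "\<dots> = (a*x+b*y)/(a+b)" by (simp add: add_divide_distrib)
  finally show ?thesis using e by simp
qed

lemma part2:
  fixes f :: "real \<Rightarrow> real"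
  assumes f0: "\<forall>x. f x \<ge> 0" and fz: "\<forall>x. f x = 0 \<longleftrightarrow> x = 0"
    and c: "c < cf f"
  shows "\<exists>(M::real measure) (X::real \<Rightarrow> real).
              prob_space M \<and> X \<in> borel_measurable M \<and> integrable M X \<and>
              c * (\<integral>\<^sup>+ \<omega>. ennreal (f (X \<omega>)) \<partial>M)
                < (\<integral>\<^sup>+ \<omega>. ennreal (f (X \<omega> - (\<integral> \<omega>'. X \<omega>' \<partial>M))) \<partial>M)"
proof -
  from c obtain a b t where a: "a > 0" and b: "b > 0"
    and lt: "c < ennreal ((a * f b + b * f (- a)) / (a * f (b - t) + b * f (- a - t)))"
    unfolding cf_def less_SUP_iff by auto
  define N where "N = a * f b + b * f (-a)"
  define D where "D = a * f (b-t) + b * f (-a-t)"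
  have "b - t \<noteq> -a - t" using a b by auto
  hence "f (b-t) > 0 \<or> f (-a-t) > 0" using f0 fz by (metis less_eq_real_def)
  hence Dpos: "D > 0" unfolding D_def using a b f0
    by (auto intro: add_pos_nonneg add_nonneg_pos)
  have N0: "N \<ge> 0" unfolding N_def using a b f0 by simp
  define p where "p = a / (a + b)"
  have p0: "0 \<le> p" "p \<le> 1" using a b by (auto simp: p_def)
  define Q where "Q = map_pmf (\<lambda>x. if x then b - t else - a - t) (bernoulli_pmf p)"
  define M where "M = measure_pmf Q"
  have ps: "prob_space M" unfolding M_def by (rule prob_space_measure_pmf)
  have fin: "finite (set_pmf Q)" unfolding Q_def by simp
  have int: "integrable M (\<lambda>x. x)" unfolding M_def by (rule integrable_measure_pmf_finite[OF fin])
  have ab: "a + b \<noteq> 0" "a + b > 0" using a b by auto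
  have "(\<integral> \<omega>'. \<omega>' \<partial>M) = (b - t) * p + (- a - t) * (1 - p)"
    unfolding M_def Q_def using p0 by simp
  also have "\<dots> = - t"
  proof -
    have pa: "p*(a+b) = a" using ab by (simp add: p_def)
    have "((b-t)*p + (-a-t)*(1-p))*(a+b) = (b-t)*(p*(a+b)) + (-a-t)*((a+b) - p*(a+b))"
      by (simp add: algebra_simps)
    also have "\<dots> = (-t)*(a+b)" unfolding pa by (simp add: algebra_simps)
    finally have "((b-t)*p + (-a-t)*(1-p))*(a+b) = (-t)*(a+b)" .
    thus ?thesis using ab(1) by (metis mult_right_cancel)
  qed
  finally have EX: "(\<integral> \<omega>'. \<omega>' \<partial>M) = - t" .
  have I1: "(\<integral>\<^sup>+ \<omega>. ennreal (f \<omega>) \<partial>M) = ennreal (D / (a+b))"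
  proof -
    have "(\<integral>\<^sup>+ \<omega>. ennreal (f \<omega>) \<partial>M) = ennreal (f (b-t)) * ennreal p + ennreal (f (-a-t)) * ennreal (1 - p)"
      unfolding M_def Q_def using p0 by simp
    also have "\<dots> = ennreal (f (b-t) * p + f (-a-t) * (1-p))"
      using p0 f0 by (simp add: ennreal_plus ennreal_mult)
    also have "f (b-t) * p + f (-a-t) * (1-p) = D / (a+b)"
      using mixlem[OF ab(1)] unfolding p_def D_def by simp
    finally show ?thesis .
  qed
  have I2: "(\<integral>\<^sup>+ \<omega>. ennreal (f (\<omega> - (\<integral> \<omega>'. \<omega>' \<partial>M))) \<partial>M) = ennreal (N / (a+b))"
  proof -
    have "(\<integral>\<^sup>+ \<omega>. ennreal (f (\<omega> - (\<integral> \<omega>'. \<omega>' \<partial>M))) \<partial>M)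
        = (\<integral>\<^sup>+ \<omega>. ennreal (f (\<omega> + t)) \<partial>M)" by (simp add: EX)
    also have "\<dots> = ennreal (f b) * ennreal p + ennreal (f (-a)) * ennreal (1 - p)"
      unfolding M_def Q_def using p0 by simp
    also have "\<dots> = ennreal (f b * p + f (-a) * (1-p))"
      using p0 f0 by (simp add: ennreal_plus ennreal_mult)
    also have "f b * p + f (-a) * (1-p) = N / (a+b)"
      using mixlem[OF ab(1)] unfolding p_def N_def by simp
    finally show ?thesis .
  qed
  have "c * ennreal (D / (a+b)) < ennreal (N / D) * ennreal (D / (a+b))"
    using lt Dpos a b unfolding N_def[symmetric] D_def[symmetric]
    by (intro ennreal_mult_strict_right_mono) auto
  also have "\<dots> = ennreal (N / (a+b))"
    using Dpos a b N0 by (simp add: ennreal_mult[symmetric])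
  finally have "c * (\<integral>\<^sup>+ \<omega>. ennreal (f \<omega>) \<partial>M)
      < (\<integral>\<^sup>+ \<omega>. ennreal (f (\<omega> - (\<integral> \<omega>'. \<omega>' \<partial>M))) \<partial>M)"
    using I1 I2 by simp
  moreover have "(\<lambda>x. x) \<in> borel_measurable M" unfolding M_def by simp
  ultimately show ?thesis using ps int by blast
qed

theorem theorem2p1:
  fixes f :: "real \<Rightarrow> real"
  assumes "f \<in> borel_measurable borel"
    and "\<forall>x. f x \<ge> 0"
    and "\<forall>x. f x = 0 \<longleftrightarrow> x = 0"
  shows "(\<forall>(M::'a measure) (X::'a \<Rightarrow> real).
            prob_space M \<and> X \<in> borel_measurable M \<and> integrable M X \<longrightarrow>
              (\<integral>\<^sup>+ \<omega>. ennreal (f (X \<omega> - (\<integral> \<omega>'. X \<omega>' \<partial>M))) \<partial>M)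
                \<le> cf f * (\<integral>\<^sup>+ \<omega>. ennreal (f (X \<omega>)) \<partial>M))
       \<and> (\<forall>c::ennreal. c < cf f \<longrightarrow>
            (\<exists>(M::real measure) (X::real \<Rightarrow> real).
              prob_space M \<and> X \<in> borel_measurable M \<and> integrable M X \<and>
              c * (\<integral>\<^sup>+ \<omega>. ennreal (f (X \<omega>)) \<partial>M)
                < (\<integral>\<^sup>+ \<omega>. ennreal (f (X \<omega> - (\<integral> \<omega>'. X \<omega>' \<partial>M))) \<partial>M)))"
proof (intro conjI allI impI)
  fix M :: "'a measure" and X :: "'a \<Rightarrow> real"
  assume h: "prob_space M \<and> X \<in> borel_measurable M \<and> integrable M X"
  show "(\<integral>\<^sup>+ \<omega>. ennreal (f (X \<omega> - (\<integral> \<omega>'. X \<omega>' \<partial>M))) \<partial>M)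
                \<le> cf f * (\<integral>\<^sup>+ \<omega>. ennreal (f (X \<omega>)) \<partial>M)"
    using part1[OF assms] h by blast
next
  fix c :: ennreal assume "c < cf f"
  thus "\<exists>(M::real measure) (X::real \<Rightarrow> real).
              prob_space M \<and> X \<in> borel_measurable M \<and> integrable M X \<and>
              c * (\<integral>\<^sup>+ \<omega>. ennreal (f (X \<omega>)) \<partial>M)
                < (\<integral>\<^sup>+ \<omega>. ennreal (f (X \<omega> - (\<integral> \<omega>'. X \<omega>' \<partial>M))) \<partial>M)"
    using part2 assms(2,3) by blast
qed

end
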